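(* (a) For $n\ge1$, the degree of $P_n$ is at most $n$. (b) For every $n$, $n!\,P_n(y)$ has integer coefficients.
   Context: Define polynomials $P_n(y)$ by $P_0(y)=y-1$ and, for $n\ge1$, $P_n=nP_{n-1}-P'_{n-1}+\frac{1}{n}\sum_{k=1}^{n-1}k\{(k-1)P_{k-1}-P_k-P'_{k-1}\}P_{n-k-1}$ (primes denote derivatives in $y$). Equivalently, $1+\sum_{n\ge1}P_{n-1}(y)x^{-n}$ is the unique solution $V$, in the ring of formal series $\sum_{n\ge0}q_n(y)x^{-n}$ with $\deg q_n\le n$, of $V=1+\frac{y}{x}-\frac{1}{x}V-V_x-\frac{1}{x}V_y+\frac{1}{x}\log V$, where $V_x,V_y$ are termwise formal derivatives and $\log$ is the formal logarithmic series. *)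

theory Defs
  imports "HOL-Computational_Algebra.Polynomial"
begin

definition Pnext :: "nat \<Rightarrow> rat poly list \<Rightarrow> rat poly" where
  "Pnext n L =
     smult (of_nat n) (L ! (n - 1)) - pderiv (L ! (n - 1))
     + smult (1 / of_nat n)
         (\<Sum>k = 1..n - 1. smult (of_nat k)
              (smult (of_nat (k - 1)) (L ! (k - 1)) - L ! k - pderiv (L ! (k - 1)))
            * L ! (n - k - 1))"

primrec Ps :: "nat \<Rightarrow> rat poly list" where
  "Ps 0 = [[:-1, 1:]]"
| "Ps (Suc m) = Ps m @ [Pnext (Suc m) (Ps m)]"

definition P :: "nat \<Rightarrow> rat poly" where
  "P n = Ps n ! n"

lemma length_Ps: "length (Ps n) = Suc n"
  by (induction n) auto

lemma Ps_nth: "i \<le> n \<Longrightarrow> Ps n ! i = P i"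
proof (induction n)
  case 0 then show ?case by (simp add: P_def)
next
  case (Suc n)
  show ?case
  proof (cases "i = Suc n")
    case True then show ?thesis by (simp add: P_def)
  next
    case False
    then have "i \<le> n" using Suc.prems by simp
    then show ?thesis using Suc.IH length_Ps[of n] by (simp add: nth_append)
  qed
qed

lemma P_0: "P 0 = [:-1, 1:]"
  by (simp add: P_def)

lemma P_rec:
  assumes "n \<ge> 1"
  shows "P n =
     smult (of_nat n) (P (n - 1)) - pderiv (P (n - 1))
     + smult (1 / of_nat n)
         (\<Sum>k = 1..n - 1. smult (of_nat k)
              (smult (of_nat (k - 1)) (P (k - 1)) - P k - pderiv (P (k - 1)))
            * P (n - k - 1))"
proof -
  obtain m where m: "n = Suc m" using assms by (cases n) auto
  have "P n = Pnext n (Ps m)" using m length_Ps[of m] by (simp add: P_def nth_append)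
  also have "\<dots> = smult (of_nat n) (P (n - 1)) - pderiv (P (n - 1))
     + smult (1 / of_nat n)
         (\<Sum>k = 1..n - 1. smult (of_nat k)
              (smult (of_nat (k - 1)) (P (k - 1)) - P k - pderiv (P (k - 1)))
            * P (n - k - 1))"
    unfolding Pnext_def using m
    by (intro arg_cong2[where f="(+)"] arg_cong2[where f=smult] sum.cong refl)
       (auto simp: Ps_nth)
  finally show ?thesis .
qed

end

theory Submission
  imports Defs
begin

definition intpoly :: "rat poly \<Rightarrow> bool" where
  "intpoly p \<longleftrightarrow> (\<forall>i. coeff p i \<in> \<int>)"

lemma intpoly_add: "intpoly p \<Longrightarrow> intpoly q \<Longrightarrow> intpoly (p + q)"
  by (auto simp: intpoly_def)
lemma intpoly_diff: "intpoly p \<Longrightarrow> intpoly q \<Longrightarrow> intpoly (p - q)"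
  by (auto simp: intpoly_def)
lemma intpoly_smult: "c \<in> \<int> \<Longrightarrow> intpoly p \<Longrightarrow> intpoly (smult c p)"
  by (auto simp: intpoly_def)
lemma intpoly_smult_nat: "intpoly p \<Longrightarrow> intpoly (smult (of_nat c) p)"
  by (auto simp: intpoly_def)
lemma intpoly_pderiv: "intpoly p \<Longrightarrow> intpoly (pderiv p)"
  by (auto simp: intpoly_def coeff_pderiv)
lemma intpoly_mult: "intpoly p \<Longrightarrow> intpoly q \<Longrightarrow> intpoly (p * q)"
  by (auto simp: intpoly_def coeff_mult intro!: Ints_sum Ints_mult)
lemma intpoly_sum: "(\<And>x. x \<in> A \<Longrightarrow> intpoly (f x)) \<Longrightarrow> intpoly (sum f A)"
  by (auto simp: intpoly_def coeff_sum intro!: Ints_sum)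

lemma smult_sum_right: "smult c (sum f A) = (\<Sum>x\<in>A. smult c (f x))"
  by (rule poly_eqI) (simp add: coeff_sum sum_distrib_left)

lemma deg_P: "degree (P n) \<le> max n 1"
proof (induction n rule: less_induct)
  case (less n)
  show ?case
  proof (cases "n = 0")
    case True then show ?thesis by (simp add: P_0)
  next
    case False
    then have n1: "n \<ge> 1" by simp
    have h1: "degree (P (n-1)) \<le> n" using less[of "n-1"] n1 by simp
    have t1: "degree (smult (of_nat n) (P (n - 1)) - pderiv (P (n - 1))) \<le> n"
      using h1 degree_smult_le[of "of_nat n" "P (n-1)"] degree_pderiv[of "P (n-1)"]
      by (intro degree_diff_le) auto
    have t2: "degree (smult (of_nat k)
              (smult (of_nat (k - 1)) (P (k - 1)) - P k - pderiv (P (k - 1)))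
            * P (n - k - 1)) \<le> n" if k: "k \<in> {1..n-1}" for k
    proof -
      have "k-1 < n" using k n1 by auto
      from less[OF this] have "degree (P (k-1)) \<le> max (k-1) 1" .
      then have a: "degree (P (k-1)) \<le> k" using k by (simp add: max_def split: if_splits)
      have "k < n" using k n1 by auto
      from less[OF this] have "degree (P (k)) \<le> max (k) 1" .
      then have b: "degree (P k) \<le> k" using k by (simp add: max_def split: if_splits)
      have "n-k-1 < n" using k n1 by auto
      from less[OF this] have "degree (P (n-k-1)) \<le> max (n-k-1) 1" .
      then have c: "degree (P (n-k-1)) \<le> n - k" using k by (simp add: max_def split: if_splits)
      have d: "degree (smult (of_nat (k - 1)) (P (k - 1)) - P k - pderiv (P (k - 1))) \<le> k"
        using a b degree_smult_le[of "of_nat (k-1)" "P (k-1)"] degree_pderiv[of "P (k-1)"]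
        by (intro degree_diff_le) auto
      have "degree (smult (of_nat k)
              (smult (of_nat (k - 1)) (P (k - 1)) - P k - pderiv (P (k - 1)))
            * P (n - k - 1)) \<le> k + (n - k)"
        using degree_mult_le[of "smult (of_nat k)
              (smult (of_nat (k - 1)) (P (k - 1)) - P k - pderiv (P (k - 1)))" "P (n-k-1)"]
          degree_smult_le[of "of_nat k" "smult (of_nat (k - 1)) (P (k - 1)) - P k - pderiv (P (k - 1))"]
          c d by linarith
      moreover have "k + (n - k) = n" using k by auto
      ultimately show ?thesis by (simp only:)
    qed
    have "degree (P n) \<le> n"
      unfolding P_rec[OF n1]
      apply (rule degree_add_le[OF t1])
      apply (rule order.trans[OF degree_smult_le])
      apply (rule degree_sum_le)
      using t2 by auto
    then show ?thesis by simp
  qed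
qed

definition Q :: "nat \<Rightarrow> rat poly" where "Q n = smult (fact n) (P n)"

lemma Q_int: "intpoly (Q n)"
proof (induction n rule: less_induct)
  case (less n)
  show ?case
  proof (cases "n = 0")
    case True then show ?thesis
      by (auto simp: Q_def P_0 intpoly_def coeff_pCons split: nat.splits)
  next
    case False
    then have n1: "n \<ge> 1" by simp
    define m where "m = n - 1"
    have nm: "n = Suc m" using n1 m_def by simp
    have e1: "smult (fact n) (smult (of_nat n) (P (n - 1)) - pderiv (P (n - 1)))
       = smult (of_nat (n*n)) (Q m) - smult (of_nat n) (pderiv (Q m))"
      by (simp add: nm Q_def smult_diff_right pderiv_smult algebra_simps)
    have i1: "intpoly (smult (of_nat (n*n)) (Q m) - smult (of_nat n) (pderiv (Q m)))"
      using less[of m] nm by (intro intpoly_diff intpoly_smult_nat intpoly_pderiv) auto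
    have e2: "smult (fact n) (smult (1 / of_nat n) S) = smult (fact m) S" for S :: "rat poly"
      proof -
      have "(fact n :: rat) * (1 / of_nat n) = fact m" using nm by (simp add: field_simps del: of_nat_Suc)
      then show ?thesis by simp
    qed
    have tm: "intpoly (smult (fact m) (smult (of_nat k)
              (smult (of_nat (k - 1)) (P (k - 1)) - P k - pderiv (P (k - 1)))
            * P (n - k - 1)))" if k: "k \<in> {1..n-1}" for k
    proof -
      obtain j where kj: "k = Suc j" using k by (cases k) auto
      have km: "k \<le> m" using k m_def by auto
      have fmn: "fact k * fact (m - k) * (m choose k) = (fact m :: nat)"
        using binomial_fact_lemma[OF km] .
      have "(of_nat (fact k * fact (m - k) * (m choose k)) :: rat) = of_nat (fact m)"
        using fmn by (rule arg_cong)
      then have fm: "(fact m :: rat) = of_nat (m choose k) * fact k * fact (m - k)"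
        by (simp add: of_nat_mult mult_ac)
      have mk: "m - k = n - k - 1" using m_def by simp
      have fk: "(fact k :: rat) = of_nat k * fact j" using kj by simp
      have A: "smult (fact k) (smult (of_nat (k - 1)) (P (k - 1)) - P k - pderiv (P (k - 1)))
           = smult (of_nat (k * j)) (Q j) - Q k - smult (of_nat k) (pderiv (Q j))"
        unfolding fk by (simp add: kj Q_def smult_diff_right smult_add_right pderiv_smult algebra_simps)
      have iA: "intpoly (smult (of_nat (k * j)) (Q j) - Q k - smult (of_nat k) (pderiv (Q j)))"
        using less[of j] less[of k] kj km nm
        by (intro intpoly_diff intpoly_smult_nat intpoly_pderiv) auto
      have "smult (fact m) (smult (of_nat k)
              (smult (of_nat (k - 1)) (P (k - 1)) - P k - pderiv (P (k - 1)))
            * P (n - k - 1))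
          = smult (of_nat ((m choose k) * k))
              (smult (fact k) (smult (of_nat (k - 1)) (P (k - 1)) - P k - pderiv (P (k - 1)))
               * Q (n - k - 1))"
        unfolding fm Q_def mk[symmetric] by (simp add: smult_diff_right smult_add_right mult_smult_left mult_smult_right algebra_simps)
      also have "intpoly \<dots>"
        unfolding A using iA less[of "n-k-1"] k
        by (intro intpoly_smult_nat intpoly_mult) auto
      finally show ?thesis .
    qed
    have "Q n = smult (of_nat (n*n)) (Q m) - smult (of_nat n) (pderiv (Q m))
        + (\<Sum>k = 1..n - 1. smult (fact m) (smult (of_nat k)
              (smult (of_nat (k - 1)) (P (k - 1)) - P k - pderiv (P (k - 1)))
            * P (n - k - 1)))"
      unfolding Q_def P_rec[OF n1] smult_add_right e1 e2 smult_sum_right ..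
    also have "intpoly \<dots>"
      using i1 tm by (intro intpoly_add intpoly_sum) auto
    finally show ?thesis .
  qed
qed

theorem theorem4p5:
  shows "(\<forall>n\<ge>1. degree (P n) \<le> n)
       \<and> (\<forall>n i. fact n * coeff (P n) i \<in> \<int>)"
proof
  show "\<forall>n\<ge>1. degree (P n) \<le> n"
  proof (intro allI impI)
    fix n :: nat assume "n \<ge> 1"
    then show "degree (P n) \<le> n" using deg_P[of n] by (simp add: max_def)
  qed
  show "\<forall>n i. fact n * coeff (P n) i \<in> \<int>"
    using Q_int by (simp add: intpoly_def Q_def)
qed

end
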